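(* Let $H=\{h_1,h_2,h_3\}$ with $\kappa_{h}=2$ for all $h\in H$, $D=\{f,m,s_1,s_2,s_3,s_4\}$ with single doctors $S=\{s_1,s_2,s_3,s_4\}$ and unique couple $c=\{f,m\}$. Suppose the hospitals' preferences over individual doctors are (best first, $\emptyset$ last): $\tilde P_{h_1}: s_3,s_4,s_1,f,m,s_2$; $\tilde P_{h_2}: s_4,s_3,f,m,s_1,s_2$; $\tilde P_{h_3}: s_3,s_4,m,f,s_1,s_2$, with each $P_h$ an arbitrary responsive extension of $\tilde P_h$ to feasible sets. Suppose the doctors' preferences are (best first, $\emptyset$ last): $P_{s_1}: h_2,h_1,h_3$; $P_{s_2}: h_3,h_1,h_2$; $P_{s_3}: h_1,h_2,h_3$; $P_{s_4}: h_2,h_1,h_3$; $P_f: h_1,h_3,h_2$; $P_m: h_2,h_1,h_3$; and the couple's preference $P_c$ ranks $(h_1,h_2),(h_1,h_1),(h_1,h_3),(h_3,h_3),(h_3,h_2),(h_3,h_1),(h_2,h_2),(h_2,h_1),(h_2,h_3)$ in this order, followed by all pairs in $\bar H^2\setminus H^2$ (in any order). Then no stable matching exists at this preference profile.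
   Context: Standing model. Let $H$ be a finite set of hospitals with $|H|\ge 2$; each $h\in H$ has a capacity $\kappa_h\in\mathbb{N}$ with $\kappa_h\ge 2$. Write $\bar H=H\cup\{\emptyset\}$, where being assigned $\emptyset$ means being unmatched. The finite set of doctors is $D=F\cup M\cup S$ (pairwise disjoint), with $F=\{f_1,\dots,f_k\}$, $M=\{m_1,\dots,m_k\}$, $k\ge 1$; the set of couples is $C=\{\{f_1,m_1\},\dots,\{f_k,m_k\}\}$, and doctors in $S$ are called single doctors. Assume $|D|\ge 4$ and $\sum_{h\in H}\kappa_h=|D|$. A matching is a map $\mu$ assigning to each $h\in H$ a set $\mu(h)\subseteq D$ with $|\mu(h)|\le\kappa_h$ and to each doctor $d$ an element $\mu(d)\in\bar H$, such that $\mu(d)=h$ iff $d\in\mu(h)$; for a couple $c=\{f,m\}$ write $\mu(c)=(\mu(f),\mu(m))$. For a set $X$, $\mathbb{L}(X)$ is the set of strict linear orders (preferences) on $X$; for a preference $P$, $R$ denotes its reflexive version ($xRy$ iff $x=y$ or $xPy$), and $r_1(P)$ its top element. Each hospital $h$ has a preference $\tilde P_h\in\mathbb{L}(D\cup\{\emptyset\})$ over individual doctors with $d\,\tilde P_h\,\emptyset$ for all $d\in D$, and a preference $P_h$ over the feasible sets $\{D'\subseteq D:|D'|\le\kappa_h\}$ that is responsive with respect to $\tilde P_h$: (i) on singletons and $\emptyset$, $P_h$ agrees with $\tilde P_h$; (ii) for all $D'\subsetneq D$ and all $D_1,D_2\subseteq D\setminus D'$ with $|D'\cup D_1|\le\kappa_h$,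 $|D'\cup D_2|\le\kappa_h$: $(D'\cup D_1)\,P_h\,(D'\cup D_2)$ iff $D_1\,P_h\,D_2$. Each doctor $d\in D$ has a preference $P_d\in\mathbb{L}(\bar H)$ with $h\,P_d\,\emptyset$ for all $h\in H$. Each couple $c=\{f,m\}$ has a preference $P_c\in\mathbb{L}(\bar H^2)$, where the pair $(h,h')$ means $f$ is assigned $h$ and $m$ is assigned $h'$; every pair in $H^2$ is preferred under $P_c$ to every pair in $\bar H^2\setminus H^2$. A preference profile consists of such preferences for all doctors, all couples and all hospitals. Blocking and stability. At a matching $\mu$, hospital $h$ is interested in a set $D'\subseteq D$ if there is $D''\subseteq\mu(h)$ with $|(\mu(h)\setminus D'')\cup D'|\le\kappa_h$ and $((\mu(h)\setminus D'')\cup D')\,P_h\,\mu(h)$. A pair $(h,s)$ with $h\in H$, $s\in S$ blocks $\mu$ if $h\,P_s\,\mu(s)$ and $h$ is interested in $\{s\}$. For a couple $c=\{f,m\}$ and $h_f,h_m\in H$, $((h_f,h_m),c)$ blocks $\mu$ if $(h_f,h_m)\,P_c\,\mu(c)$ and: (i) if $h_f\ne h_m$, $\mu(f)\ne h_f$ and $\mu(m)\ne h_m$, then $h_f$ is interested in $\{f\}$ and $h_m$ is interested in $\{m\}$; (ii) if $h_f\ne h_m$ and, for $\{x,y\}=\{f,m\}$, $\mu(x)=h_x$ and $\mu(y)\neq h_y$, then $h_y$ is interested in $\{y\}$; (iii) if $h_f=h_m=h$, then $h$ is interested in $\{f,m\}$. A matching is stable if it is blocked by no such pair. *)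

theory Defs
  imports Main
begin

text \<open>The hospital set H is UNIV :: 'h set, the doctor set D is UNIV :: 'd set.
  An assignment to a doctor is a 'h option, None meaning unmatched (the empty hospital).
  Strict preferences are binary predicates P x y meaning "x is strictly preferred to y".\<close>

definition strict_linear_on :: "'a set \<Rightarrow> ('a \<Rightarrow> 'a \<Rightarrow> bool) \<Rightarrow> bool" where
  "strict_linear_on A P \<longleftrightarrow>
     (\<forall>x y. P x y \<longrightarrow> x \<in> A \<and> y \<in> A) \<and>
     (\<forall>x\<in>A. \<not> P x x) \<and>
     (\<forall>x\<in>A. \<forall>y\<in>A. \<forall>z\<in>A. P x y \<and> P y z \<longrightarrow> P x z) \<and>
     (\<forall>x\<in>A. \<forall>y\<in>A. x \<noteq> y \<longrightarrow> P x y \<or> P y x)"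

definition list_pref :: "'a list \<Rightarrow> 'a \<Rightarrow> 'a \<Rightarrow> bool" where
  "list_pref xs a b \<longleftrightarrow> (\<exists>i j. i < j \<and> j < length xs \<and> xs ! i = a \<and> xs ! j = b)"

definition feasible :: "('h \<Rightarrow> nat) \<Rightarrow> 'h \<Rightarrow> 'd set set" where
  "feasible kappa h = {X. finite X \<and> card X \<le> kappa h}"

definition responsive ::
  "('h \<Rightarrow> nat) \<Rightarrow> ('h \<Rightarrow> 'd option \<Rightarrow> 'd option \<Rightarrow> bool)
   \<Rightarrow> ('h \<Rightarrow> 'd set \<Rightarrow> 'd set \<Rightarrow> bool) \<Rightarrow> 'h \<Rightarrow> bool" where
  "responsive kappa tP PH h \<longleftrightarrow>
     (\<forall>d d'. PH h {d} {d'} \<longleftrightarrow> tP h (Some d) (Some d')) \<and>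
     (\<forall>d. PH h {d} {} \<longleftrightarrow> tP h (Some d) None) \<and>
     (\<forall>d. PH h {} {d} \<longleftrightarrow> tP h None (Some d)) \<and>
     (\<forall>D' D1 D2. D' \<subset> UNIV \<and> D1 \<subseteq> - D' \<and> D2 \<subseteq> - D'
        \<and> D' \<union> D1 \<in> feasible kappa h \<and> D' \<union> D2 \<in> feasible kappa h
        \<longrightarrow> (PH h (D' \<union> D1) (D' \<union> D2) \<longleftrightarrow> PH h D1 D2))"

definition assigned :: "('d \<Rightarrow> 'h option) \<Rightarrow> 'h \<Rightarrow> 'd set" where
  "assigned mu h = {d. mu d = Some h}"

definition is_matching :: "('h \<Rightarrow> nat) \<Rightarrow> ('d \<Rightarrow> 'h option) \<Rightarrow> bool" where
  "is_matching kappa mu \<longleftrightarrow> (\<forall>h. card (assigned mu h) \<le> kappa h)"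

definition interested ::
  "('h \<Rightarrow> nat) \<Rightarrow> ('h \<Rightarrow> 'd set \<Rightarrow> 'd set \<Rightarrow> bool) \<Rightarrow> ('d \<Rightarrow> 'h option) \<Rightarrow> 'h \<Rightarrow> 'd set \<Rightarrow> bool" where
  "interested kappa PH mu h D' \<longleftrightarrow>
     (\<exists>D''. D'' \<subseteq> assigned mu h \<and>
        card ((assigned mu h - D'') \<union> D') \<le> kappa h \<and>
        PH h ((assigned mu h - D'') \<union> D') (assigned mu h))"

definition single_blocks ::
  "('h \<Rightarrow> nat) \<Rightarrow> ('h \<Rightarrow> 'd set \<Rightarrow> 'd set \<Rightarrow> bool) \<Rightarrow> ('d \<Rightarrow> 'h option \<Rightarrow> 'h option \<Rightarrow> bool)
   \<Rightarrow> ('d \<Rightarrow> 'h option) \<Rightarrow> 'h \<Rightarrow> 'd \<Rightarrow> bool" where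
  "single_blocks kappa PH Pd mu h s \<longleftrightarrow>
     Pd s (Some h) (mu s) \<and> interested kappa PH mu h {s}"

definition couple_blocks ::
  "('h \<Rightarrow> nat) \<Rightarrow> ('h \<Rightarrow> 'd set \<Rightarrow> 'd set \<Rightarrow> bool)
   \<Rightarrow> ('h option \<times> 'h option \<Rightarrow> 'h option \<times> 'h option \<Rightarrow> bool)
   \<Rightarrow> ('d \<Rightarrow> 'h option) \<Rightarrow> 'h \<Rightarrow> 'h \<Rightarrow> 'd \<Rightarrow> 'd \<Rightarrow> bool" where
  "couple_blocks kappa PH Pcpl mu hf hm f m \<longleftrightarrow>
     Pcpl (Some hf, Some hm) (mu f, mu m) \<and>
     (hf \<noteq> hm \<and> mu f \<noteq> Some hf \<and> mu m \<noteq> Some hm \<longrightarrow>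
        interested kappa PH mu hf {f} \<and> interested kappa PH mu hm {m}) \<and>
     (hf \<noteq> hm \<and> mu f = Some hf \<and> mu m \<noteq> Some hm \<longrightarrow> interested kappa PH mu hm {m}) \<and>
     (hf \<noteq> hm \<and> mu m = Some hm \<and> mu f \<noteq> Some hf \<longrightarrow> interested kappa PH mu hf {f}) \<and>
     (hf = hm \<longrightarrow> interested kappa PH mu hf {f, m})"

text \<open>Stability; S is the set of single doctors, C the set of couples (f, m),
  Pc (f, m) the preference of couple (f, m).\<close>
definition stable ::
  "('h \<Rightarrow> nat) \<Rightarrow> ('h \<Rightarrow> 'd set \<Rightarrow> 'd set \<Rightarrow> bool) \<Rightarrow> ('d \<Rightarrow> 'h option \<Rightarrow> 'h option \<Rightarrow> bool)
   \<Rightarrow> ('d \<times> 'd \<Rightarrow> 'h option \<times> 'h option \<Rightarrow> 'h option \<times> 'h option \<Rightarrow> bool)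
   \<Rightarrow> 'd set \<Rightarrow> ('d \<times> 'd) set \<Rightarrow> ('d \<Rightarrow> 'h option) \<Rightarrow> bool" where
  "stable kappa PH Pd Pc S C mu \<longleftrightarrow>
     is_matching kappa mu \<and>
     (\<forall>h. \<forall>s\<in>S. \<not> single_blocks kappa PH Pd mu h s) \<and>
     (\<forall>(f, m)\<in>C. \<forall>hf hm. \<not> couple_blocks kappa PH (Pc (f, m)) mu hf hm f m)"

datatype hosp = H1 | H2 | H3
datatype doc = F | M | S1 | S2 | S3 | S4

fun hosp_rank :: "hosp \<Rightarrow> doc option list" where
  "hosp_rank H1 = [Some S3, Some S4, Some S1, Some F, Some M, Some S2, None]"
| "hosp_rank H2 = [Some S4, Some S3, Some F, Some M, Some S1, Some S2, None]"
| "hosp_rank H3 = [Some S3, Some S4, Some M, Some F, Some S1, Some S2, None]"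

fun doc_rank :: "doc \<Rightarrow> hosp option list" where
  "doc_rank S1 = [Some H2, Some H1, Some H3, None]"
| "doc_rank S2 = [Some H3, Some H1, Some H2, None]"
| "doc_rank S3 = [Some H1, Some H2, Some H3, None]"
| "doc_rank S4 = [Some H2, Some H1, Some H3, None]"
| "doc_rank F = [Some H1, Some H3, Some H2, None]"
| "doc_rank M = [Some H2, Some H1, Some H3, None]"

definition couple_rank :: "(hosp \<times> hosp) list" where
  "couple_rank = [(H1,H2),(H1,H1),(H1,H3),(H3,H3),(H3,H2),(H3,H1),(H2,H2),(H2,H1),(H2,H3)]"

end

theory Submission
  imports Defs
begin

lemma list_pref_Nil[simp]: "list_pref [] a b = False"
  by (simp add: list_pref_def)

lemma list_pref_Cons[simp]:
  "list_pref (x#xs) a b = ((x = a \<and> b \<in> set xs) \<or> list_pref xs a b)"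
proof
  assume "list_pref (x#xs) a b"
  then obtain i j where ij: "i < j" "j < length (x#xs)" "(x#xs) ! i = a" "(x#xs) ! j = b"
    unfolding list_pref_def by blast
  then obtain j' where j': "j = Suc j'" by (cases j) auto
  show "(x = a \<and> b \<in> set xs) \<or> list_pref xs a b"
  proof (cases i)
    case 0
    then show ?thesis using ij j' by auto
  next
    case (Suc i')
    then have "list_pref xs a b" unfolding list_pref_def
      using ij j' by (intro exI[of _ i'] exI[of _ j']) auto
    then show ?thesis by simp
  qed
next
  assume "(x = a \<and> b \<in> set xs) \<or> list_pref xs a b"
  then show "list_pref (x#xs) a b"
  proof
    assume h: "x = a \<and> b \<in> set xs"
    then obtain j where "j < length xs" "xs ! j = b" by (auto simp: in_set_conv_nth)
    then show ?thesis unfolding list_pref_def using h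
      by (intro exI[of _ 0] exI[of _ "Suc j"]) auto
  next
    assume "list_pref xs a b"
    then obtain i j where "i < j" "j < length xs" "xs ! i = a" "xs ! j = b"
      unfolding list_pref_def by blast
    then show ?thesis unfolding list_pref_def
      by (intro exI[of _ "Suc i"] exI[of _ "Suc j"]) auto
  qed
qed

lemma UNIV_doc: "(UNIV :: doc set) = {F, M, S1, S2, S3, S4}"
  using doc.exhaust by auto

lemma finite_doc[simp]: "finite (X :: doc set)"
proof -
  have "finite (UNIV :: doc set)" unfolding UNIV_doc by simp
  then show ?thesis using finite_subset[of X "UNIV :: doc set"] by blast
qed

lemma tP_None: "list_pref (hosp_rank h) (Some s) None"
  by (cases h; cases s) simp_all

lemma resp_app:
  assumes "responsive k tP PH h" "D' \<noteq> UNIV" "D1 \<subseteq> - D'" "D2 \<subseteq> - D'"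
    "D' \<union> D1 \<in> feasible k h" "D' \<union> D2 \<in> feasible k h"
  shows "PH h (D' \<union> D1) (D' \<union> D2) = PH h D1 D2"
  using assms unfolding responsive_def by blast

lemma resp_single:
  assumes "responsive k tP PH h"
  shows "PH h {d} {d'} = tP h (Some d) (Some d')" "PH h {d} {} = tP h (Some d) None"
  using assms unfolding responsive_def by blast+

lemma int_add:
  assumes resp: "responsive (\<lambda>_. 2) (\<lambda>h. list_pref (hosp_rank h)) PH h"
    and s: "s \<notin> assigned mu h" and c: "card (assigned mu h) < 2"
  shows "interested (\<lambda>_. 2) PH mu h {s}"
proof -
  let ?A = "assigned mu h"
  have "PH h (?A \<union> {s}) (?A \<union> {}) = PH h {s} {}"
    by (rule resp_app[OF resp]) (use s c in \<open>auto simp: feasible_def\<close>)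
  then have "PH h (?A \<union> {s}) ?A" using resp_single(2)[OF resp] tP_None by simp
  moreover have "card ((?A - {}) \<union> {s}) \<le> 2" using s c by simp
  ultimately show ?thesis unfolding interested_def by (intro exI[of _ "{}"]) auto
qed

lemma int_rep:
  assumes resp: "responsive (\<lambda>_. 2) (\<lambda>h. list_pref (hosp_rank h)) PH h"
    and s: "s \<notin> assigned mu h" and c: "card (assigned mu h) \<le> 2"
    and b: "b \<in> assigned mu h" and p: "list_pref (hosp_rank h) (Some s) (Some b)"
  shows "interested (\<lambda>_. 2) PH mu h {s}"
proof -
  let ?A = "assigned mu h"
  have e: "(?A - {b}) \<union> {b} = ?A" using b by auto
  have c2: "card ((?A - {b}) \<union> {s}) \<le> 2" using s c b
    by (simp add: card_Diff_singleton)
  have "PH h ((?A - {b}) \<union> {s}) ((?A - {b}) \<union> {b}) = PH h {s} {b}"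
    by (rule resp_app[OF resp]) (use s c b c2 e in \<open>auto simp: feasible_def\<close>)
  then have "PH h ((?A - {b}) \<union> {s}) ?A" using resp_single(1)[OF resp] p e by simp
  then show ?thesis unfolding interested_def using c2 b by (intro exI[of _ "{b}"]) auto
qed

lemma int_gen:
  assumes resp: "responsive (\<lambda>_. 2) (\<lambda>h. list_pref (hosp_rank h)) PH h"
    and s: "s \<notin> assigned mu h" and c: "card (assigned mu h) \<le> 2"
    and all: "\<forall>b. mu b = Some h \<longrightarrow> b \<noteq> x \<longrightarrow> list_pref (hosp_rank h) (Some s) (Some b)"
  shows "interested (\<lambda>_. 2) PH mu h {s}"
proof (cases "card (assigned mu h) < 2")
  case True
  then show ?thesis using int_add[OF resp s] by blast
next
  case False
  then have "card (assigned mu h) = 2" using c by simp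
  have "\<exists>b\<in>assigned mu h. b \<noteq> x"
  proof (rule ccontr)
    assume "\<not> (\<exists>b\<in>assigned mu h. b \<noteq> x)"
    then have "assigned mu h \<subseteq> {x}" by blast
    then have "card (assigned mu h) \<le> 1" using card_mono[of "{x}"] by fastforce
    then show False using \<open>card (assigned mu h) = 2\<close> by simp
  qed
  then obtain b where "b \<in> assigned mu h" "b \<noteq> x" by blast
  then show ?thesis using int_rep[OF resp s c] all by (auto simp: assigned_def)
qed


lemma slo_trans:
  assumes "strict_linear_on A P" "P x y" "P y z" shows "P x z"
  using assms unfolding strict_linear_on_def by blast

lemma PH_H3:
  assumes resp: "responsive (\<lambda>_. 2) (\<lambda>h. list_pref (hosp_rank h)) PH H3"
    and sl: "strict_linear_on (feasible (\<lambda>_. 2) H3) (PH H3)"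
    and A: "A \<subseteq> {F, M, S2}" and nFM: "\<not> (F \<in> A \<and> M \<in> A)"
  shows "PH H3 {F, M} A"
proof -
  have a1: "PH H3 {F, M} {F}"
    using resp_app[OF resp, of "{F}" "{M}" "{}"] resp_single[OF resp]
    by (simp add: feasible_def insert_commute UNIV_doc)
  have a2: "PH H3 {F, M} {M}"
    using resp_app[OF resp, of "{M}" "{F}" "{}"] resp_single[OF resp]
    by (simp add: feasible_def insert_commute UNIV_doc)
  have a3: "PH H3 {F} {}"
    using resp_single[OF resp] by simp
  have a4: "PH H3 {F, M} {F, S2}"
    using resp_app[OF resp, of "{F}" "{M}" "{S2}"] resp_single[OF resp]
    by (simp add: feasible_def insert_commute UNIV_doc)
  have a5: "PH H3 {F, M} {M, S2}"
    using resp_app[OF resp, of "{M}" "{F}" "{S2}"] resp_single[OF resp]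
    by (simp add: feasible_def insert_commute UNIV_doc)
  have a6: "PH H3 {F, S2} {S2}"
    using resp_app[OF resp, of "{S2}" "{F}" "{}"] resp_single[OF resp]
    by (simp add: feasible_def insert_commute UNIV_doc)
  have a7: "PH H3 {F, M} {}" using slo_trans[OF sl a1 a3] .
  have a8: "PH H3 {F, M} {S2}" using slo_trans[OF sl a4 a6] .
  have "A = {} \<or> A = {F} \<or> A = {M} \<or> A = {S2} \<or> A = {F, S2} \<or> A = {M, S2}"
  proof (cases "F \<in> A"; cases "M \<in> A"; cases "S2 \<in> A")
  qed (use A nFM in auto)
  then show ?thesis using a1 a2 a5 a4 a7 a8 by auto
qed


lemma Pc_eval:
  assumes "\<forall>a b a' b'. Pc (Some a, Some b) (Some a', Some b') \<longleftrightarrow>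
                      list_pref couple_rank (a, b) (a', b')"
    and "\<forall>a b y. (\<nexists>a' b'. y = (Some a', Some b')) \<longrightarrow> Pc (Some a, Some b) y"
  shows "Pc (Some a, Some b) (x, y) = (case (x, y) of (Some a', Some b') \<Rightarrow>
           list_pref couple_rank (a, b) (a', b') | _ \<Rightarrow> True)"
  using assms by (cases x; cases y) auto

lemma card3:
  fixes mu :: "doc \<Rightarrow> hosp option"
  assumes "card (assigned mu h) \<le> 2" "mu a = Some h" "mu b = Some h" "mu c = Some h"
    "a \<noteq> b" "a \<noteq> c" "b \<noteq> c"
  shows False
proof -
  have "{a, b, c} \<subseteq> assigned mu h" using assms by (auto simp: assigned_def)
  then have "card {a, b, c} \<le> card (assigned mu h)" by (intro card_mono) auto
  then show False using assms by simp
qed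

theorem mainTheorem9:
  fixes PH :: "hosp \<Rightarrow> doc set \<Rightarrow> doc set \<Rightarrow> bool"
    and Pc :: "hosp option \<times> hosp option \<Rightarrow> hosp option \<times> hosp option \<Rightarrow> bool"
  assumes "\<forall>h. strict_linear_on (feasible (\<lambda>_. 2) h) (PH h)"
    and "\<forall>h. responsive (\<lambda>_. 2) (\<lambda>h. list_pref (hosp_rank h)) PH h"
    and "strict_linear_on UNIV Pc"
    and "\<forall>a b a' b'. Pc (Some a, Some b) (Some a', Some b') \<longleftrightarrow>
                      list_pref couple_rank (a, b) (a', b')"
    and "\<forall>a b y. (\<nexists>a' b'. y = (Some a', Some b')) \<longrightarrow> Pc (Some a, Some b) y"
  shows "\<not> (\<exists>mu. stable (\<lambda>_. 2) PH (\<lambda>d. list_pref (doc_rank d)) (\<lambda>_. Pc)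
                   {S1, S2, S3, S4} {(F, M)} mu)"
proof
  assume "\<exists>mu. stable (\<lambda>_. 2) PH (\<lambda>d. list_pref (doc_rank d)) (\<lambda>_. Pc)
                   {S1, S2, S3, S4} {(F, M)} mu"
  then obtain mu where st: "stable (\<lambda>_. 2) PH (\<lambda>d. list_pref (doc_rank d)) (\<lambda>_. Pc)
                   {S1, S2, S3, S4} {(F, M)} mu" by blast
  have resp: "\<And>h. responsive (\<lambda>_. 2) (\<lambda>h. list_pref (hosp_rank h)) PH h" using assms(2) by blast
  have cap: "\<And>h. card (assigned mu h) \<le> 2"
    using st unfolding stable_def is_matching_def by blast
  have nsb: "\<And>h s. s \<in> {S1, S2, S3, S4} \<Longrightarrow>
      \<not> (list_pref (doc_rank s) (Some h) (mu s) \<and> interested (\<lambda>_. 2) PH mu h {s})"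
    using st unfolding stable_def single_blocks_def by blast
  have ncb: "\<And>hf hm. \<not> couple_blocks (\<lambda>_. 2) PH Pc mu hf hm F M"
    using st unfolding stable_def by auto
  have Pce: "\<And>a b x y. Pc (Some a, Some b) (x, y) = (case (x, y) of (Some a', Some b') \<Rightarrow>
           list_pref couple_rank (a, b) (a', b') | _ \<Rightarrow> True)"
    using Pc_eval[OF assms(4) assms(5)] by blast
  have notin: "\<And>d h. mu d \<noteq> Some h \<Longrightarrow> d \<notin> assigned mu h" by (simp add: assigned_def)
  have S3: "mu S3 = Some H1"
  proof (rule ccontr)
    assume a: "mu S3 \<noteq> Some H1"
    have "list_pref (doc_rank S3) (Some H1) (mu S3)"
      using a by (cases "mu S3") (auto, metis hosp.exhaust)
    moreover have "interested (\<lambda>_. 2) PH mu H1 {S3}"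
    proof (rule int_gen[OF resp notin[OF a] cap, of S3])
      show "\<forall>b. mu b = Some H1 \<longrightarrow> b \<noteq> S3 \<longrightarrow> list_pref (hosp_rank H1) (Some S3) (Some b)"
        by (intro allI, case_tac b) auto
    qed
    ultimately show False using nsb[of S3 H1] by auto
  qed
  have S4: "mu S4 = Some H2"
  proof (rule ccontr)
    assume a: "mu S4 \<noteq> Some H2"
    have "list_pref (doc_rank S4) (Some H2) (mu S4)"
      using a by (cases "mu S4") (auto, metis hosp.exhaust)
    moreover have "interested (\<lambda>_. 2) PH mu H2 {S4}"
    proof (rule int_gen[OF resp notin[OF a] cap, of S4])
      show "\<forall>b. mu b = Some H2 \<longrightarrow> b \<noteq> S4 \<longrightarrow> list_pref (hosp_rank H2) (Some S4) (Some b)"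
        by (intro allI, case_tac b) auto
    qed
    ultimately show False using nsb[of S4 H2] by auto
  qed
  have S1: "mu S1 = Some H1 \<or> mu S1 = Some H2"
  proof (rule ccontr)
    assume a: "\<not> (mu S1 = Some H1 \<or> mu S1 = Some H2)"
    then have a1: "mu S1 \<noteq> Some H1" by blast
    have "list_pref (doc_rank S1) (Some H1) (mu S1)"
      using a by (cases "mu S1") (auto, metis hosp.exhaust)
    moreover have "interested (\<lambda>_. 2) PH mu H1 {S1}"
    proof (rule int_gen[OF resp notin[OF a1] cap, of S3])
      show "\<forall>b. mu b = Some H1 \<longrightarrow> b \<noteq> S3 \<longrightarrow> list_pref (hosp_rank H1) (Some S1) (Some b)"
        using a S4 by (intro allI, case_tac b) auto
    qed
    ultimately show False using nsb[of S1 H1] by auto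
  qed
  then show False
  proof
    assume S1b: "mu S1 = Some H2"
    have nM: "mu M \<noteq> Some H2" using card3[OF cap, of S4 H2 S1 M] S4 S1b by auto
    have i2: "interested (\<lambda>_. 2) PH mu H2 {M}"
      using int_rep[OF resp notin[OF nM] cap, of S1] S1b by (simp add: assigned_def)
    have i1: "mu F \<noteq> Some H1 \<Longrightarrow> interested (\<lambda>_. 2) PH mu H1 {F}"
    proof -
      assume nF: "mu F \<noteq> Some H1"
      show ?thesis
      proof (rule int_gen[OF resp notin[OF nF] cap, of S3])
        show "\<forall>b. mu b = Some H1 \<longrightarrow> b \<noteq> S3 \<longrightarrow> list_pref (hosp_rank H1) (Some F) (Some b)"
          using nF S1b S4 by (intro allI, case_tac b) auto
      qed
    qed
    have "Pc (Some H1, Some H2) (mu F, mu M)"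
      unfolding Pce using nM
      by (cases "mu F"; cases "mu M") (auto simp: couple_rank_def, (metis hosp.exhaust)+)
    then have "couple_blocks (\<lambda>_. 2) PH Pc mu H1 H2 F M"
      unfolding couple_blocks_def using nM i1 i2 by auto
    then show False using ncb by blast
  next
    assume S1a: "mu S1 = Some H1"
    have nF1: "mu F \<noteq> Some H1" using card3[OF cap, of S3 H1 S1 F] S3 S1a by auto
    have nM1: "mu M \<noteq> Some H1" using card3[OF cap, of S3 H1 S1 M] S3 S1a by auto
    show False
    proof (cases "mu F = Some H3 \<and> mu M = Some H3")
      case True
      have "list_pref (doc_rank S1) (Some H2) (mu S1)" using S1a by simp
      moreover have "interested (\<lambda>_. 2) PH mu H2 {S1}"
      proof (rule int_gen[OF resp notin cap, of S1 H2 S4])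
        show "mu S1 \<noteq> Some H2" using S1a by simp
        show "\<forall>b. mu b = Some H2 \<longrightarrow> b \<noteq> S4 \<longrightarrow> list_pref (hosp_rank H2) (Some S1) (Some b)"
          using True S1a S3 by (intro allI, case_tac b) auto
      qed
      ultimately show False using nsb[of S1 H2] by auto
    next
      case False
      have sub: "assigned mu H3 \<subseteq> {F, M, S2}"
      proof
        fix d assume "d \<in> assigned mu H3"
        then show "d \<in> {F, M, S2}" using S1a S3 S4 by (cases d) (auto simp: assigned_def)
      qed
      have nFM: "\<not> (F \<in> assigned mu H3 \<and> M \<in> assigned mu H3)"
        using False by (auto simp: assigned_def)
      have ph: "PH H3 {F, M} (assigned mu H3)"
        using PH_H3[OF resp assms(1)[rule_format, of H3] sub nFM] .
      have "interested (\<lambda>_. 2) PH mu H3 {F, M}"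
        unfolding interested_def using ph
        by (intro exI[of _ "assigned mu H3"]) auto
      moreover have "Pc (Some H3, Some H3) (mu F, mu M)"
        unfolding Pce using nF1 nM1 False
        by (cases "mu F"; cases "mu M") (auto simp: couple_rank_def, (metis hosp.exhaust)+)
      ultimately have "couple_blocks (\<lambda>_. 2) PH Pc mu H3 H3 F M"
        unfolding couple_blocks_def by auto
      then show False using ncb by blast
    qed
  qed
qed

end
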